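(* Let $n$ be a positive integer. (a) For every positive integer $c$ with $c\leq \max_{k\in\mathbb{Z}_{>0}}\bigl(2^k n-(k+2^k-2)2^k-1\bigr)$, there is an arithmetical structure $(r_1,\dots,r_n)$ on $K_n$ with $r_1=c$. (b) For every prime number $p$ with $p\leq \max_{k\in\mathbb{Z}_{>0}}\bigl(2^k n-(k+2^k-3)2^k-3\bigr)$, there is an arithmetical structure $(r_1,\dots,r_n)$ on $K_n$ with $r_1=p$.
   Context: An arithmetical structure on the complete graph $K_n$ is an $n$-tuple $(r_1,r_2,\dots,r_n)$ of positive integers with $\gcd(r_1,\dots,r_n)=1$ such that $r_j$ divides $\sum_{i=1}^n r_i$ for every $j$. The entries are always listed so that $r_1\geq r_2\geq\dots\geq r_n$; thus $r_1$ is the largest value of the structure. *)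

theory Defs
  imports "HOL-Computational_Algebra.Primes"
begin

text \<open>An arithmetical structure on the complete graph K_n, written as the list
  [r_1, ..., r_n] with r_1 \<ge> r_2 \<ge> ... \<ge> r_n (so r_1 = r ! 0 is the largest value).\<close>
definition arith_structure_K :: "nat \<Rightarrow> nat list \<Rightarrow> bool" where
  "arith_structure_K n r \<longleftrightarrow>
     length r = n \<and> (\<forall>x\<in>set r. 0 < x) \<and> sorted_wrt (\<lambda>a b. a \<ge> b) r \<and>
     Gcd (set r) = 1 \<and> (\<forall>x\<in>set r. x dvd sum_list r)"

end

theory Submission
  imports Defs
begin

lemma pow_ge: "k + 1 \<le> (2::nat)^k"
  by (induction k) auto

lemma pow_ge2: "2 \<le> k \<Longrightarrow> k + 2 \<le> (2::nat)^k"
proof (induction k)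
  case 0 then show ?case by simp
next
  case (Suc k)
  show ?case
  proof (cases "k = 1")
    case True then show ?thesis by simp
  next
    case False
    with Suc have "k + 2 \<le> 2^k" by simp
    then show ?thesis by simp
  qed
qed

lemma B: "1 \<le> m \<Longrightarrow> m \<le> x \<Longrightarrow> x + 3 \<le> (m + 2 - k) * 2^k \<Longrightarrow>
   \<exists>L. length L = m \<and> sum_list L = x \<and> (\<forall>y\<in>set L. y dvd (2::nat)^k)"
proof (induction k arbitrary: m x)
  case 0 then show ?case by simp
next
  case (Suc k)
  have main: "\<forall>x. 1 \<le> m \<longrightarrow> m \<le> x \<longrightarrow> x + 3 \<le> (m + 2 - Suc k) * 2^Suc k \<longrightarrow>
     (\<exists>L. length L = m \<and> sum_list L = x \<and> (\<forall>y\<in>set L. y dvd (2::nat)^Suc k))" for m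
  proof (induction m rule: less_induct)
    case (less m)
    show ?case
    proof (intro allI impI)
      fix x assume h1: "1 \<le> m" and h2: "m \<le> x" and h3: "x + 3 \<le> (m + 2 - Suc k) * 2^Suc k"
      define P where "P = (2::nat)^k"
      have P1: "k + 1 \<le> P" using pow_ge P_def by simp
      have P2: "2 \<le> k \<Longrightarrow> k + 2 \<le> P" using pow_ge2 P_def by simp
      have h3': "x + 3 \<le> (m + 1 - k) * (2 * P)" using h3 P_def by simp
      consider (a) "x + 3 \<le> (m+2-k)*P" | (b) "x = m" | (c) "x = m*P"
        | (d) "\<not> x + 3 \<le> (m+2-k)*P" "x \<noteq> m" "x \<noteq> m*P" by blast
      then show "\<exists>L. length L = m \<and> sum_list L = x \<and> (\<forall>y\<in>set L. y dvd (2::nat)^Suc k)"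
      proof cases
        case a
        from Suc.IH[OF h1 h2] a P_def obtain L where
          "length L = m" "sum_list L = x" "\<forall>y\<in>set L. y dvd (2::nat)^k" by auto
        moreover have "(2::nat)^k dvd 2^Suc k" by simp
        ultimately show ?thesis by (blast intro: dvd_trans)
      next
        case b
        then show ?thesis by (intro exI[of _ "replicate m 1"]) (auto simp: sum_list_replicate)
      next
        case c
        then show ?thesis using P_def
          by (intro exI[of _ "replicate m P"]) (auto simp: sum_list_replicate)
      next
        case d
        have mk: "k + 1 \<le> m"
        proof (rule ccontr)
          assume "\<not> k + 1 \<le> m"
          then consider "m < k" | "m = k" by linarith
          then show False
          proof cases
            case 1 then have "m + 1 - k = 0" by simp
            then show False using h3' by simp
          next
            case 2 then show False using h3' d(1) by simp
          qed
        qed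
        then obtain i where i: "m = k + 1 + i" using le_Suc_ex[OF mk] by blast
        define Q where "Q = i * P"
        have e1: "(m+2-k)*P = Q + 3 * P" using i Q_def by (simp add: algebra_simps)
        have e2: "(m+1-k)*(2*P) = 2 * Q + 4 * P" using i Q_def by (simp add: algebra_simps)
        have e3: "m * P = k * P + P + Q" using i Q_def by (simp add: algebra_simps)
        have iQ: "i \<le> Q" using Q_def P1 by simp
        have x1: "Q + 3 * P < x + 3" using d(1) e1 by linarith
        have x2: "x + 3 \<le> 2 * Q + 4 * P" using h3' e2 by linarith
        have big: "k + i + 2 * P \<le> x"
        proof -
          consider "k = 0" | "k = 1" | "2 \<le> k" by linarith
          then show ?thesis
          proof cases
            case 1 then have "P = 1" using P_def by simp
            then show ?thesis using x1 d(2) i iQ Q_def 1 by simp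
          next
            case 2 then have "P = 2" using P_def by simp
            then show ?thesis using x1 d(3) i Q_def 2 by simp
          next
            case 3 then show ?thesis using P2 x1 iQ by linarith
          qed
        qed
        have m2: "2 \<le> m"
        proof (rule ccontr)
          assume "\<not> 2 \<le> m"
          then have "m = 1" "k = 0" "i = 0" using h1 i by auto
          then show False using x2 d(2) h2 Q_def P_def by simp
        qed
        have lt: "m - 1 < m" using h1 by simp
        have s1: "1 \<le> m - 1" using m2 by simp
        have s2: "m - 1 \<le> x - 2 * P" using big i by simp
        have s3: "x - 2 * P + 3 \<le> (m - 1 + 2 - Suc k) * 2 ^ Suc k"
        proof -
          have "(m - 1 + 2 - Suc k) * 2 ^ Suc k = 2 * Q + 2 * P" using i Q_def P_def
            by (simp add: algebra_simps)
          then show ?thesis using x2 big by linarith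
        qed
        from less.IH[OF lt, rule_format, OF s1 s2 s3] obtain L where
          L: "length L = m - 1" "sum_list L = x - 2 * P" "\<forall>y\<in>set L. y dvd (2::nat)^Suc k" by blast
        show ?thesis
        proof (intro exI[of _ "2 * P # L"] conjI)
          show "length (2 * P # L) = m" using L m2 by simp
          show "sum_list (2 * P # L) = x" using L big by simp
          show "\<forall>y\<in>set (2 * P # L). y dvd 2 ^ Suc k" using L P_def by simp
        qed
      qed
    qed
  qed
  then show ?case using Suc.prems by blast
qed

lemma sorted_rep: "R x x \<Longrightarrow> sorted_wrt R (replicate n x)"
  by (induction n) auto

lemma easy:
  assumes "c < n" "1 \<le> c"
  shows "\<exists>r. arith_structure_K n r \<and> r ! 0 = c"
proof -
  define r where "r = replicate (n - c) c @ replicate c (1::nat)"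
  have s: "sum_list r = (n - c + 1) * c" unfolding r_def by (simp add: sum_list_replicate)
  have one: "1 \<in> set r" unfolding r_def using assms by simp
  have "Gcd (set r) = 1" using Gcd_dvd_nat[OF one] by simp
  moreover have "length r = n" unfolding r_def using assms by simp
  moreover have "\<forall>x\<in>set r. 0 < x" unfolding r_def using assms by auto
  moreover have "sorted_wrt (\<lambda>a b. a \<ge> b) r" unfolding r_def using assms
    by (auto simp: sorted_wrt_append intro: sorted_rep)
  moreover have "\<forall>x\<in>set r. x dvd sum_list r" unfolding s unfolding r_def by auto
  moreover have "r ! 0 = c" unfolding r_def using assms by (simp add: nth_append)
  ultimately show ?thesis unfolding arith_structure_K_def by blast
qed

lemma build:
  assumes k: "1 \<le> k" and c: "1 \<le> c" and len: "length L = n + 1 - 2^k" and n: "2^k \<le> n + 1"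
    and ne: "L \<noteq> []" and sL: "sum_list L = c" and dv: "\<forall>y\<in>set L. y dvd (2::nat)^k"
    and g: "odd c \<or> 1 \<in> set L"
  shows "\<exists>r. arith_structure_K n r \<and> r ! 0 = c"
proof -
  define r where "r = replicate (2^k - 1) c @ rev (sort L)"
  have Pk: "2 \<le> (2::nat)^k" using k by (metis one_le_numeral power_increasing power_one_right)
  have sL': "sum_list (rev (sort L)) = c"
    by (metis sL sum_list_rev sum_mset_sum_list mset_sort)
  obtain t where t: "(2::nat)^k = Suc t" using Pk by (cases "(2::nat)^k") auto
  have s: "sum_list r = 2^k * c" unfolding r_def using sL' t
    by (simp add: sum_list_replicate algebra_simps)
  have setr: "set r = {c} \<union> set L" unfolding r_def using Pk by auto
  have yle: "\<forall>y\<in>set L. y \<le> c" using sL member_le_sum_list by blast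
  have ypos: "\<forall>y\<in>set L. 0 < y" using dv by (metis dvd_0_left_iff gr0I power_not_zero zero_neq_numeral)
  have "Gcd (set r) = 1"
  proof -
    from g show ?thesis
    proof
      assume "odd c"
      obtain y where y: "y \<in> set L" using ne by (cases L) auto
      have d1: "Gcd (set r) dvd c" by (rule Gcd_dvd_nat) (simp add: setr)
      have d2: "Gcd (set r) dvd 2^k" using Gcd_dvd_nat[of y "set r"] setr y dv dvd_trans by blast
      have "coprime c (2^k)" using \<open>odd c\<close> by simp
      then show ?thesis using d1 d2 by (metis coprime_common_divisor nat_dvd_1_iff_1)
    next
      assume "1 \<in> set L"
      then show ?thesis using Gcd_dvd_nat[of 1 "set r"] setr by simp
    qed
  qed
  moreover have "length r = n" unfolding r_def using len n by simp
  moreover have "\<forall>x\<in>set r. 0 < x" using setr c ypos by auto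
  moreover have "sorted_wrt (\<lambda>a b. a \<ge> b) r" unfolding r_def using yle
    by (auto simp: sorted_wrt_append sorted_wrt_rev intro: sorted_rep)
  moreover have "\<forall>x\<in>set r. x dvd sum_list r" unfolding s setr using dv
    by (auto intro: dvd_mult2)
  moreover have "r ! 0 = c" unfolding r_def using Pk by (simp add: nth_append)
  ultimately show ?thesis unfolding arith_structure_K_def by blast
qed

lemma partA:
  assumes c0: "0 < c" and k0: "0 < k"
    and hc: "int c \<le> 2^k * int n - (int k + 2^k - 2) * 2^k - 1"
  shows "\<exists>r. arith_structure_K n r \<and> r ! 0 = c"
proof (cases "c < n")
  case True then show ?thesis using easy c0 by simp
next
  case False
  define P where "P = (2::nat)^k"
  have P1: "k + 1 \<le> P" using pow_ge P_def by simp
  have Pe: "even P" using k0 P_def by simp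
  have h1: "int c + 1 \<le> int P * (int n - int k - int P + 2)"
    using hc unfolding P_def by (simp add: algebra_simps)
  have "0 < int P * (int n - int k - int P + 2)" using h1 by simp
  then have "0 < int n - int k - int P + 2" using P1 by (simp add: zero_less_mult_iff)
  then have nk: "k + P \<le> n + 1" by linarith
  define m where "m = n + 1 - P"
  have mk: "k \<le> m" using nk m_def by simp
  have e: "int (m + 1 - k) = int n - int k - int P + 2" using nk mk m_def by simp
  have h2: "c + 1 \<le> (m + 1 - k) * P"
  proof -
    have "int (c + 1) \<le> int ((m + 1 - k) * P)" using h1 e by (simp add: mult.commute)
    then show ?thesis by linarith
  qed
  have m1: "1 \<le> m" using mk k0 by simp
  have mc: "m \<le> c" using False m_def P1 by simp
  have len: "n + 1 - 2^k = m" using m_def P_def by simp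
  have nP: "2^k \<le> n + 1" using nk P_def by simp
  show ?thesis
  proof (cases "c + 1 = (m + 1 - k) * P")
    case True
    have "even (c + 1)" using True Pe by simp
    then have oc: "odd c" by simp
    have "c + 3 \<le> (m + 2 - k) * P"
    proof -
      have "(m + 2 - k) * P = (m + 1 - k) * P + P" using mk by (simp add: algebra_simps Suc_diff_le)
      then show ?thesis using h2 P1 k0 by linarith
    qed
    then obtain L where L: "length L = m" "sum_list L = c" "\<forall>y\<in>set L. y dvd 2^k"
      using B[OF m1 mc] P_def by blast
    show ?thesis
      by (rule build[of k c L]) (use L k0 c0 len nP m1 oc in auto)
  next
    case False
    then have h3: "c + 2 \<le> (m + 1 - k) * P" using h2 by simp
    have m2: "2 \<le> m"
    proof (rule ccontr)
      assume "\<not> 2 \<le> m"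
      then have "m = 1" "k = 1" using m1 mk k0 by auto
      then show False using h3 P_def c0 by simp
    qed
    have hh: "c - 1 + 3 \<le> (m - 1 + 2 - k) * 2^k" using h3 m2 mk c0 P_def
      by (simp add: Suc_diff_le)
    have a1: "1 \<le> m - 1" using m2 by simp
    have a2: "m - 1 \<le> c - 1" using mc by simp
    obtain L where L: "length L = m - 1" "sum_list L = c - 1" "\<forall>y\<in>set L. y dvd 2^k"
      using B[OF a1 a2 hh] by blast
    show ?thesis
      by (rule build[of k c "1 # L"]) (use L k0 c0 len nP m2 in auto)
  qed
qed

lemma partB:
  assumes p: "prime p" and k0: "0 < k"
    and hc: "int p \<le> 2^k * int n - (int k + 2^k - 3) * 2^k - 3"
  shows "\<exists>r. arith_structure_K n r \<and> r ! 0 = p"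
proof (cases "p < n")
  case True then show ?thesis using easy prime_gt_0_nat[OF p] by simp
next
  case False
  define P where "P = (2::nat)^k"
  have P1: "k + 1 \<le> P" using pow_ge P_def by simp
  have p2: "2 \<le> p" using p prime_ge_2_nat by blast
  have h1: "int p + 3 \<le> int P * (int n - int k - int P + 3)"
    using hc unfolding P_def by (simp add: algebra_simps)
  have "0 < int P * (int n - int k - int P + 3)" using h1 by simp
  then have "0 < int n - int k - int P + 3" using P1 by (simp add: zero_less_mult_iff)
  then have nk: "k + P \<le> n + 2" by linarith
  define m where "m = n + 1 - P"
  have nP': "P \<le> n + 1" using nk k0 by simp
  have mk: "k \<le> m + 1" using nk m_def nP' by simp
  have e: "int (m + 2 - k) = int n - int k - int P + 3" using nP' mk m_def by simp
  have h2: "p + 3 \<le> (m + 2 - k) * P"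
  proof -
    have "int (p + 3) \<le> int ((m + 2 - k) * P)" using h1 e by (simp add: mult.commute)
    then show ?thesis by linarith
  qed
  have m1: "1 \<le> m"
  proof (rule ccontr)
    assume "\<not> 1 \<le> m"
    then have "m = 0" by simp
    then have "k = 1" using mk k0 by simp
    then show False using h2 \<open>m = 0\<close> P_def by simp
  qed
  have mc: "m \<le> p" using False m_def P1 by simp
  have len: "n + 1 - 2^k = m" using m_def P_def by simp
  have nP: "2^k \<le> n + 1" using nP' P_def by simp
  have op: "odd p"
  proof (cases "p = 2")
    case True
    have "k = 1"
    proof (rule ccontr)
      assume "k \<noteq> 1"
      then have "2 \<le> k" using k0 by simp
      then have "(2::nat)^2 \<le> 2^k" by (rule power_increasing) simp
      then show False using m1 m_def False True P_def by simp
    qed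
    then show ?thesis using h2 m1 m_def False True P_def by simp
  next
    case False
    then show ?thesis using prime_odd_nat[OF p] p2 by simp
  qed
  obtain L where L: "length L = m" "sum_list L = p" "\<forall>y\<in>set L. y dvd 2^k"
    using B[OF m1 mc] h2 P_def by blast
  show ?thesis
    by (rule build[of k p L]) (use L k0 p2 len nP m1 op in auto)
qed

theorem theorem2p1:
  fixes n :: nat
  assumes "0 < n"
  shows "(\<forall>c::nat. 0 < c \<and>
            (\<exists>k::nat. 0 < k \<and> int c \<le> 2^k * int n - (int k + 2^k - 2) * 2^k - 1)
            \<longrightarrow> (\<exists>r. arith_structure_K n r \<and> r ! 0 = c))
       \<and> (\<forall>p::nat. prime p \<and>
            (\<exists>k::nat. 0 < k \<and> int p \<le> 2^k * int n - (int k + 2^k - 3) * 2^k - 3)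
            \<longrightarrow> (\<exists>r. arith_structure_K n r \<and> r ! 0 = p))"
  using partA partB by blast

end
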